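(* Let $q\in(1,+\infty)$ and define $f:[1,+\infty)\to\mathbb R$ by $f(1)=-1$ and, for $y>1$, $$f(y)=-q\,\frac{y^{\frac q{q-1}}}{y^{\frac q{q-1}}-(y-1)^{\frac q{q-1}}}+(q-1)y.$$ Then: \begin{enumerate} \item $f$ is continuous and increasing, smooth on $(1,+\infty)$, and is a bijection from $[1,+\infty)$ onto $[-1,-1/2)$ with an increasing and continuous inverse. \item For $y>1$, $$f'(y)=\frac{(q-1)^2\left(y^{\frac q{q-1}}-(y-1)^{\frac q{q-1}}\right)^2-q^2y^{\frac1{q-1}}(y-1)^{\frac1{q-1}}}{(q-1)\left(y^{\frac q{q-1}}-(y-1)^{\frac q{q-1}}\right)^2},$$ and the extension of $f'$ by the value $q-1$ at $y=1$ is continuous on $[1,+\infty)$. \end{enumerate} *)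

theory Defs
  imports "HOL-Analysis.Analysis"
begin

definition fA :: "real \<Rightarrow> real \<Rightarrow> real" where
  "fA q y = (if y = 1 then -1
     else - q * (y powr (q/(q-1))) / (y powr (q/(q-1)) - (y-1) powr (q/(q-1))) + (q-1) * y)"

definition fA' :: "real \<Rightarrow> real \<Rightarrow> real" where
  "fA' q y =
     ((q-1)^2 * (y powr (q/(q-1)) - (y-1) powr (q/(q-1)))^2
        - q^2 * y powr (1/(q-1)) * (y-1) powr (1/(q-1)))
     / ((q-1) * (y powr (q/(q-1)) - (y-1) powr (q/(q-1)))^2)"

definition smooth_on :: "(real \<Rightarrow> real) \<Rightarrow> real set \<Rightarrow> bool" where
  "smooth_on g S \<longleftrightarrow> (\<exists>D :: nat \<Rightarrow> real \<Rightarrow> real. D 0 = g \<and>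
      (\<forall>k. \<forall>y\<in>S. (D k has_real_derivative D (Suc k) y) (at y)))"

end

theory Submission
  imports Defs "HOL-Real_Asymp.Real_Asymp"
begin


lemma H_pos:
  fixes a m x :: real
  assumes a: "0 < a" and m: "0 < m" and x: "a < x"
  shows "x powr (m+1) - a powr m * x - m*(x-a)*a powr m > 0"
proof -
  define H where "H = (\<lambda>x::real. x powr (m+1) - a powr m * x - m*(x-a)*a powr m)"
  have dH: "(H has_real_derivative ((m+1) * z powr m - a powr m - m * a powr m)) (at z)" if "z > 0" for z
    unfolding H_def using that
    by (auto intro!: derivative_eq_intros)
  have "H a < H x"
  proof (rule DERIV_pos_imp_increasing_open[OF x])
    fix z assume z: "a < z" "z < x"
    have "a powr m < z powr m" using z a m by (simp add: powr_less_mono2)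
    then have "(m+1) * (z powr m - a powr m) > 0" using m by simp
    then have "(m+1) * z powr m - a powr m - m * a powr m > 0"
      by (simp add: algebra_simps)
    then show "\<exists>y. (H has_real_derivative y) (at z) \<and> 0 < y" using dH[of z] z a by auto
  next
    show "continuous_on {a..x} H"
    proof (intro continuous_at_imp_continuous_on ballI)
      fix y assume "y \<in> {a..x}"
      then have "y > 0" using a by auto
      then show "isCont H y" using dH by (meson DERIV_isCont)
    qed
  qed
  moreover have "H a = 0" unfolding H_def using a by (simp add: powr_add)
  ultimately show ?thesis unfolding H_def by simp
qed

lemma key_ineq:
  fixes a b r :: real
  assumes a: "0 < a" and r: "0 < r" and b: "a < b"
  shows "(r+1)*(b-a)*(a powr (r/2) * b powr (r/2)) < b powr (r+1) - a powr (r+1)"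
proof -
  define m where "m = r/2"
  have m: "m > 0" using r by (simp add: m_def)
  have rm: "r = 2*m" by (simp add: m_def)
  define G where "G = (\<lambda>x::real. x powr (r+1) - a powr (r+1) - (r+1)*(x-a)*(a powr m * x powr m))"
  have dG: "(G has_real_derivative ((r+1) * z powr r - (r+1)*((1-0)*(a powr m * z powr m) + (z-a)*(a powr m * (m * z powr (m-1) * 1))))) (at z)" if "z > 0" for z
    unfolding G_def using that
    by (auto intro!: derivative_eq_intros simp: algebra_simps)
  have "G a < G b"
  proof (rule DERIV_pos_imp_increasing_open[OF b])
    fix z assume z: "a < z" "z < b"
    have zp: "z > 0" using z a by simp
    have Hp: "z powr (m+1) - a powr m * z - m*(z-a)*a powr m > 0" using H_pos[OF a m z(1)] .
    have eq: "(r+1) * z powr r - (r+1)*((1-0)*(a powr m * z powr m) + (z-a)*(a powr m * (m * z powr (m-1) * 1)))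
       = (r+1) * z powr (m-1) * (z powr (m+1) - a powr m * z - m*(z-a)*a powr m)"
    proof -
      define w where "w = z powr (m-1)"
      have e2: "z powr m = w * z" using zp powr_add[of z "m-1" 1] by (simp add: w_def)
      have e1: "z powr r = w * w * z * z" using powr_add[of z m m] e2 by (simp add: rm mult_2 algebra_simps)
      have e3: "z powr (m+1) = w * z * z" using zp powr_add[of z "m" 1] e2 by simp
      show ?thesis unfolding e1 e2 e3 w_def[symmetric] by (simp add: algebra_simps)
    qed
    have "(r+1) * z powr (m-1) * (z powr (m+1) - a powr m * z - m*(z-a)*a powr m) > 0"
      using Hp zp r by simp
    then show "\<exists>y. (G has_real_derivative y) (at z) \<and> 0 < y" using dG[OF zp] eq by auto
  next
    show "continuous_on {a..b} G"
    proof (intro continuous_at_imp_continuous_on ballI)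
      fix x assume "x \<in> {a..b}"
      then have "x > 0" using a by auto
      then show "isCont G x" using dG by (meson DERIV_isCont)
    qed
  qed
  moreover have "G a = 0" unfolding G_def by simp
  ultimately show ?thesis unfolding G_def m_def by simp
qed


definition Dn :: "real \<Rightarrow> real \<Rightarrow> real" where
  "Dn q y = y powr (q/(q-1)) - (y-1) powr (q/(q-1))"

lemma exps:
  fixes q :: real assumes "q > 1"
  shows "q/(q-1) = 1/(q-1) + 1" "q/(q-1) - 1 = 1/(q-1)" "(q-1)*(1/(q-1)+1) = q"
  using assms by (auto simp: field_simps)

lemma Dn_pos:
  fixes q y :: real assumes q: "q > 1" and y: "y \<ge> 1"
  shows "Dn q y > 0"
proof -
  have "(y-1) powr (q/(q-1)) < y powr (q/(q-1))"
    using q y by (intro powr_less_mono2) auto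
  then show ?thesis by (simp add: Dn_def)
qed

lemma fA_eq:
  fixes q y :: real assumes q: "q > 1" and y: "y \<ge> 1"
  shows "fA q y = - q * (y powr (q/(q-1))) / Dn q y + (q-1) * y"
  using q y by (auto simp: fA_def Dn_def)

lemma fA_cont:
  fixes q :: real assumes q: "q > 1"
  shows "continuous_on {1..} (fA q)"
proof -
  have c1: "continuous_on {1..} (\<lambda>y::real. (y-1) powr (q/(q-1)))"
    using q by (intro continuous_on_powr' continuous_intros) auto
  have c2: "continuous_on {1..} (\<lambda>y::real. y powr (q/(q-1)))"
    using q by (intro continuous_on_powr' continuous_intros) auto
  define P1 where "P1 = (\<lambda>y::real. (y-1) powr (q/(q-1)))"
  define P2 where "P2 = (\<lambda>y::real. y powr (q/(q-1)))"
  have lt: "P2 y - P1 y \<noteq> 0" if "y \<in> {1..}" for y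
    using Dn_pos[OF q, of y] that by (simp add: Dn_def P1_def P2_def)
  have "continuous_on {1..} (\<lambda>y. - q * P2 y / (P2 y - P1 y) + (q-1) * y)"
    using c1 c2 lt unfolding P1_def[symmetric] P2_def[symmetric]
    by (intro continuous_intros) auto
  then have "continuous_on {1..} (\<lambda>y. - q * (y powr (q/(q-1))) / Dn q y + (q-1) * y)"
    by (simp add: P1_def P2_def Dn_def)
  then show ?thesis
    by (rule continuous_on_cong[THEN iffD1, rotated 2]) (use fA_eq[OF q] in auto)
qed

lemma alg_deriv:
  fixes q y Y Z p d :: real
  assumes q: "q \<noteq> 1" and dd: "d = y*Y - (y-1)*Z" and d: "d \<noteq> 0" and p: "p = q/(q-1)"
  shows "((-q*(p*Y))*d - (-q*(y*Y))*(p*Y - p*Z*1))/(d*d) + (q-1)*1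
     = ((q-1)^2*d^2 - q^2*Y*Z)/((q-1)*d^2)"
proof -
  have n: "(-q*(p*Y))*d - (-q*(y*Y))*(p*Y - p*Z*1) = -q*p*Y*Z"
    unfolding dd by (simp add: algebra_simps)
  have qq: "q - 1 \<noteq> 0" using q by simp
  show ?thesis unfolding n unfolding p using qq d by (simp add: field_simps power2_eq_square)
qed

lemma fA_deriv:
  fixes q y :: real assumes q: "q > 1" and y: "y > 1"
  shows "(fA q has_real_derivative fA' q y) (at y)"
proof -
  define p where "p = q/(q-1)"
  define r where "r = 1/(q-1)"
  have pr: "p - 1 = r" "p = r + 1" using exps[OF q] by (auto simp: p_def r_def)
  define Y where "Y = y powr r"
  define Z where "Z = (y-1) powr r"
  have A: "y powr p = y * Y" using y by (simp add: Y_def pr(2) powr_add)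
  have B: "(y-1) powr p = (y-1) * Z" using y by (simp add: Z_def pr(2) powr_add)
  have dA: "((\<lambda>x. x powr p) has_real_derivative p * Y) (at y)"
    using has_real_derivative_powr[of y p] y by (simp add: pr(1) Y_def)
  have dB: "((\<lambda>x. (x-1) powr p) has_real_derivative p * Z * 1) (at y)"
  proof -
    have d0: "((\<lambda>z. z powr p) has_real_derivative p * (y-1) powr (p-1)) (at (y-1))"
      using has_real_derivative_powr[of "y-1" p] y by simp
    have d1: "((\<lambda>x. x - 1) has_real_derivative 1) (at y)"
      by (auto intro!: derivative_eq_intros)
    show ?thesis using DERIV_chain2[OF d0 d1] by (simp add: pr(1) Z_def)
  qed
  have Dne: "y*Y - (y-1)*Z \<noteq> 0" using Dn_pos[OF q, of y] y A B by (simp add: Dn_def p_def)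
  have "((\<lambda>x. -q * x powr p / (x powr p - (x-1) powr p) + (q-1)*x) has_real_derivative
     ((-q*(p*Y))*(y powr p - (y-1) powr p) - (-q*(y powr p))*(p*Y - p*Z*1))/((y powr p - (y-1) powr p)*(y powr p - (y-1) powr p)) + (q-1)*1) (at y)"
    using Dne A B
    by (intro DERIV_add DERIV_divide DERIV_cmult DERIV_diff dA dB DERIV_ident) auto
  note deriv = this
  have eqE: "((-q*(p*Y))*(y*Y - (y-1)*Z) - (-q*(y*Y))*(p*Y - p*Z*1))/((y*Y - (y-1)*Z)*(y*Y - (y-1)*Z)) + (q-1)*1 = fA' q y"
  proof -
    have "fA' q y = ((q-1)^2*(y*Y - (y-1)*Z)^2 - q^2*Y*Z)/((q-1)*(y*Y - (y-1)*Z)^2)"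
      unfolding fA'_def p_def[symmetric] r_def[symmetric] A B Y_def[symmetric] Z_def[symmetric] by simp
    then show ?thesis using alg_deriv[OF _ refl Dne p_def] q by simp
  qed
  have d: "((\<lambda>x. -q * x powr p / (x powr p - (x-1) powr p) + (q-1)*x) has_real_derivative fA' q y) (at y)"
    using deriv[unfolded A B, unfolded eqE] .
  show ?thesis
    by (rule has_field_derivative_transform_within_open[OF d, of "{1<..}"])
       (use y in \<open>auto simp: fA_def p_def\<close>)
qed

lemma fA'_pos:
  fixes q y :: real assumes q: "q > 1" and y: "y > 1"
  shows "fA' q y > 0"
proof -
  define r where "r = 1/(q-1)"
  have r: "r > 0" using q by (simp add: r_def)
  have pr: "q/(q-1) = r + 1" "(q-1)*(r+1) = q" using exps[OF q] by (auto simp: r_def)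
  define W where "W = (y-1) powr (r/2) * y powr (r/2)"
  have K: "(r+1)*(y-(y-1))*W < y powr (r+1) - (y-1) powr (r+1)"
    unfolding W_def using key_ineq[of "y-1" r y] y r by simp
  have W0: "W \<ge> 0" by (simp add: W_def)
  have "(q-1)*((r+1)*W) < (q-1)*Dn q y" using K q by (simp add: Dn_def pr(1))
  then have "q*W < (q-1)*Dn q y" using pr(2) by (simp add: mult.assoc[symmetric])
  then have "(q*W)^2 < ((q-1)*Dn q y)^2" using W0 q
    by (intro power_strict_mono) auto
  moreover have "W^2 = (y-1) powr r * y powr r"
    using y powr_add[of "y-1" "r/2" "r/2"] powr_add[of "y" "r/2" "r/2"]
    by (simp add: W_def power2_eq_square algebra_simps)
  ultimately have "q^2 * ((y-1) powr r * y powr r) < (q-1)^2 * (Dn q y)^2"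
    by (simp only: power_mult_distrib)
  then have num: "(q-1)^2 * (Dn q y)^2 - q^2 * y powr r * (y-1) powr r > 0"
    by (simp add: mult_ac)
  have den: "(q-1) * (Dn q y)^2 > 0" using q Dn_pos[OF q, of y] y by simp
  show ?thesis using num den unfolding fA'_def Dn_def r_def by simp
qed

lemma fA_strict_mono:
  fixes q :: real assumes q: "q > 1"
  shows "strict_mono_on {1..} (fA q)"
proof (rule strict_mono_onI)
  fix x y :: real assume xy: "x \<in> {1..}" "y \<in> {1..}" "x < y"
  show "fA q x < fA q y"
  proof (rule DERIV_pos_imp_increasing_open[OF xy(3)])
    fix z assume "x < z" "z < y"
    then have "z > 1" using xy by auto
    then show "\<exists>d. (fA q has_real_derivative d) (at z) \<and> 0 < d"
      using fA_deriv[OF q] fA'_pos[OF q] by blast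
  next
    show "continuous_on {x..y} (fA q)"
      by (rule continuous_on_subset[OF fA_cont[OF q]]) (use xy in auto)
  qed
qed

lemma fA'_ext_cont:
  fixes q :: real assumes q: "q > 1"
  shows "continuous_on {1..} (\<lambda>y. if y = 1 then q - 1 else fA' q y)"
proof -
  define r where "r = 1/(q-1)"
  have r: "r > 0" using q by (simp add: r_def)
  define E where "E = (\<lambda>y. (q-1) - q^2/(q-1) * (y powr r * (y-1) powr r) / (Dn q y)^2)"
  have c1: "continuous_on {1..} (\<lambda>y::real. (y-1) powr r)"
    using r by (intro continuous_on_powr' continuous_intros) auto
  have c2: "continuous_on {1..} (\<lambda>y::real. y powr r)"
    using r by (intro continuous_on_powr' continuous_intros) auto
  have c1': "continuous_on {1..} (\<lambda>y::real. (y-1) powr (q/(q-1)))"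
    using q by (intro continuous_on_powr' continuous_intros) auto
  have c2': "continuous_on {1..} (\<lambda>y::real. y powr (q/(q-1)))"
    using q by (intro continuous_on_powr' continuous_intros) auto
  define P1 where "P1 = (\<lambda>y::real. (y-1) powr (q/(q-1)))"
  define P2 where "P2 = (\<lambda>y::real. y powr (q/(q-1)))"
  define P3 where "P3 = (\<lambda>y::real. (y-1) powr r)"
  define P4 where "P4 = (\<lambda>y::real. y powr r)"
  have lt: "(P2 y - P1 y)^2 \<noteq> 0" if "y \<in> {1..}" for y
    using Dn_pos[OF q, of y] that by (simp add: Dn_def P1_def P2_def)
  have "continuous_on {1..} (\<lambda>y. (q-1) - q^2/(q-1) * (P4 y * P3 y) / (P2 y - P1 y)^2)"
    using c1 c2 c1' c2' lt unfolding P1_def[symmetric] P2_def[symmetric] P3_def[symmetric] P4_def[symmetric]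
    by (intro continuous_intros) auto
  then have cE: "continuous_on {1..} E"
    by (simp add: P1_def P2_def P3_def P4_def Dn_def E_def)
  have eq: "E y = (if y = 1 then q - 1 else fA' q y)" if "y \<in> {1..}" for y
  proof (cases "y = 1")
    case True then show ?thesis using r by (simp add: E_def)
  next
    case False
    have "Dn q y \<noteq> 0" using Dn_pos[OF q, of y] that by simp
    then show ?thesis using False q
      by (simp add: E_def fA'_def Dn_def[symmetric] r_def field_simps) (simp add: power2_eq_square algebra_simps)
  qed
  show ?thesis by (rule continuous_on_cong[THEN iffD1, OF refl eq cE])
qed



lemma lim_p:
  fixes p :: real assumes "p > 1"
  shows "((\<lambda>y. -(p/(p-1)) * y powr p / (y powr p - (y-1) powr p) + (1/(p-1)) * y) \<longlongrightarrow> -1/2) at_top"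
  using assms by real_asymp

lemma fA_lim:
  fixes q :: real assumes q: "q > 1"
  shows "(fA q \<longlongrightarrow> -1/2) at_top"
proof -
  define p where "p = q/(q-1)"
  have p: "p > 1" using q by (simp add: p_def field_simps)
  have e1: "p/(p-1) = q" and e2: "1/(p-1) = q-1" using q by (auto simp: p_def field_simps)
  have L: "((\<lambda>y. -q * y powr p / (y powr p - (y-1) powr p) + (q-1) * y) \<longlongrightarrow> -1/2) at_top"
    using lim_p[OF p] unfolding e1 e2 .
  have ev: "eventually (\<lambda>y. -q * y powr p / (y powr p - (y-1) powr p) + (q-1) * y = fA q y) at_top"
    unfolding eventually_at_top_linorder
    by (rule exI[of _ 2]) (auto simp: fA_def p_def)
  show ?thesis by (rule Lim_transform_eventually[OF L ev])
qed

lemma fA_one: "fA q 1 = -1" by (simp add: fA_def)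

lemma fA_lt:
  fixes q y :: real assumes q: "q > 1" and y: "y \<ge> 1"
  shows "fA q y < -1/2"
proof -
  have "fA q (y+1) \<le> -1/2"
  proof (rule tendsto_lowerbound[OF fA_lim[OF q]])
    show "eventually (\<lambda>z. fA q (y+1) \<le> fA q z) at_top"
      unfolding eventually_at_top_linorder
      by (rule exI[of _ "y+1"]) (use y in \<open>auto intro!: strict_mono_on_leD[OF fA_strict_mono[OF q]]\<close>)
  qed simp
  moreover have "fA q y < fA q (y+1)"
    using y by (intro strict_mono_onD[OF fA_strict_mono[OF q]]) auto
  ultimately show ?thesis by simp
qed

lemma fA_large:
  fixes q c :: real assumes q: "q > 1" and c: "c < -1/2"
  shows "\<exists>Y\<ge>1. c < fA q Y"
proof -
  have "eventually (\<lambda>z. c < fA q z) at_top"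
    using order_tendstoD(1)[OF fA_lim[OF q] c] .
  then obtain N where N: "\<And>z. z \<ge> N \<Longrightarrow> c < fA q z"
    unfolding eventually_at_top_linorder by blast
  show ?thesis by (rule exI[of _ "max N 1"]) (auto intro: N)
qed

lemma fA_bij:
  fixes q :: real assumes q: "q > 1"
  shows "bij_betw (fA q) {1..} {-1..<-1/2}"
  unfolding bij_betw_def
proof
  show inj: "inj_on (fA q) {1..}" by (rule strict_mono_on_imp_inj_on[OF fA_strict_mono[OF q]])
  show "fA q ` {1..} = {-1..<-1/2}"
  proof
    show "fA q ` {1..} \<subseteq> {-1..<-1/2}"
    proof
      fix u assume "u \<in> fA q ` {1..}"
      then obtain y where y: "y \<ge> 1" "u = fA q y" by auto
      have "fA q 1 \<le> fA q y" using y by (intro strict_mono_on_leD[OF fA_strict_mono[OF q]]) auto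
      then show "u \<in> {-1..<-1/2}" using fA_lt[OF q y(1)] y by (simp add: fA_one)
    qed
  next
    show "{-1..<-1/2} \<subseteq> fA q ` {1..}"
    proof
      fix c :: real assume c: "c \<in> {-1..<-1/2}"
      obtain Y where Y: "Y \<ge> 1" "c < fA q Y" using fA_large[OF q, of c] c by auto
      have "\<exists>x. 1 \<le> x \<and> x \<le> Y \<and> fA q x = c"
        by (rule IVT') (use c Y in \<open>auto simp: fA_one intro: continuous_on_subset[OF fA_cont[OF q]]\<close>)
      then show "c \<in> fA q ` {1..}" by force
    qed
  qed
qed

lemma inv_mono:
  fixes q :: real assumes q: "q > 1"
  shows "strict_mono_on {-1..<-1/2} (the_inv_into {1..} (fA q))"
proof (rule strict_mono_onI)
  fix u v :: real assume uv: "u \<in> {-1..<-1/2}" "v \<in> {-1..<-1/2}" "u < v"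
  have B: "bij_betw (fA q) {1..} {-1..<-1/2}" by (rule fA_bij[OF q])
  have inj: "inj_on (fA q) {1..}" using B by (simp add: bij_betw_def)
  have im: "fA q ` {1..} = {-1..<-1/2}" using B by (simp add: bij_betw_def)
  define a where "a = the_inv_into {1..} (fA q) u"
  define b where "b = the_inv_into {1..} (fA q) v"
  have uB: "u \<in> fA q ` {1..}" using im uv by auto
  have vB: "v \<in> fA q ` {1..}" using im uv by auto
  have a: "a \<in> {1..}" "fA q a = u" unfolding a_def
    by (rule the_inv_into_into[OF inj uB subset_refl], rule f_the_inv_into_f[OF inj uB])
  have b: "b \<in> {1..}" "fA q b = v" unfolding b_def
    by (rule the_inv_into_into[OF inj vB subset_refl], rule f_the_inv_into_f[OF inj vB])
  show "the_inv_into {1..} (fA q) u < the_inv_into {1..} (fA q) v"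
    unfolding a_def[symmetric] b_def[symmetric]
  proof (rule ccontr)
    assume "\<not> a < b"
    then have "b \<le> a" by simp
    then have "fA q b \<le> fA q a" using a b by (intro strict_mono_on_leD[OF fA_strict_mono[OF q]]) auto
    then show False using a b uv by simp
  qed
qed

lemma inv_cont:
  fixes q :: real assumes q: "q > 1"
  shows "continuous_on {-1..<-1/2} (the_inv_into {1..} (fA q))"
  unfolding continuous_on_eq_continuous_within
proof
  fix c :: real assume c: "c \<in> {-1..<-1/2}"
  define g where "g = the_inv_into {1..} (fA q)"
  have B: "bij_betw (fA q) {1..} {-1..<-1/2}" by (rule fA_bij[OF q])
  have inj: "inj_on (fA q) {1..}" using B by (simp add: bij_betw_def)
  have im: "fA q ` {1..} = {-1..<-1/2}" using B by (simp add: bij_betw_def)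
  obtain Y where Y: "Y \<ge> 1" "c < fA q Y" using fA_large[OF q, of c] c by auto
  have cK: "continuous_on (fA q ` {1..Y}) g"
    by (rule continuous_on_inv) (auto simp: g_def intro: continuous_on_subset[OF fA_cont[OF q]] the_inv_into_f_f[OF inj])
  have sub: "{-1..<fA q Y} \<subseteq> fA q ` {1..Y}"
  proof
    fix u assume u: "u \<in> {-1..<fA q Y}"
    have "\<exists>x. 1 \<le> x \<and> x \<le> Y \<and> fA q x = u"
      by (rule IVT') (use u Y in \<open>auto simp: fA_one intro: continuous_on_subset[OF fA_cont[OF q]]\<close>)
    then show "u \<in> fA q ` {1..Y}" by force
  qed
  have c1: "c \<in> {-1..<fA q Y}" using c Y by auto
  have "continuous (at c within {-1..<fA q Y}) g"
    using cK sub c1 unfolding continuous_on_eq_continuous_within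
    by (meson continuous_within_subset subsetD)
  moreover have "at c within {-1..<-1/2} = at c within {-1..<fA q Y}"
  proof (rule at_within_nhd[of c "{..<fA q Y}"])
    show "c \<in> {..<fA q Y}" using Y by simp
    show "{-1..<-1/2} \<inter> {..<fA q Y} - {c} = {-1..<fA q Y} \<inter> {..<fA q Y} - {c}"
      using fA_lt[OF q Y(1)] by auto
  qed simp
  ultimately show "continuous (at c within {-1..<-1/2}) (the_inv_into {1..} (fA q))"
    by (simp add: g_def)
qed



inductive_set SM :: "(real \<Rightarrow> real) set" where
  const: "(\<lambda>y. c) \<in> SM"
| ident: "(\<lambda>y. y) \<in> SM"
| pw: "(\<lambda>y. y powr a) \<in> SM"
| pw1: "(\<lambda>y. (y-1) powr a) \<in> SM"
| add: "f \<in> SM \<Longrightarrow> g \<in> SM \<Longrightarrow> (\<lambda>y. f y + g y) \<in> SM"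
| mul: "f \<in> SM \<Longrightarrow> g \<in> SM \<Longrightarrow> (\<lambda>y. f y * g y) \<in> SM"
| inv: "f \<in> SM \<Longrightarrow> (\<forall>y>1. f y \<noteq> 0) \<Longrightarrow> (\<lambda>y. inverse (f y)) \<in> SM"
| cong: "f \<in> SM \<Longrightarrow> (\<forall>y>1. g y = f y) \<Longrightarrow> g \<in> SM"

lemma SM_deriv:
  assumes "f \<in> SM"
  shows "\<exists>f'\<in>SM. \<forall>y>1. (f has_real_derivative f' y) (at y)"
  using assms
proof (induction rule: SM.induct)
  case (const c)
  show ?case by (rule bexI[of _ "\<lambda>y. 0"]) (auto intro: SM.const)
next
  case ident
  show ?case by (rule bexI[of _ "\<lambda>y. 1"]) (auto intro: SM.const)
next
  case (pw a)
  show ?case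
  proof (rule bexI[of _ "\<lambda>y. a * y powr (a-1)"])
    show "\<forall>y>1. ((\<lambda>y. y powr a) has_real_derivative a * y powr (a - 1)) (at y)"
      using has_real_derivative_powr by auto
    show "(\<lambda>y. a * y powr (a - 1)) \<in> SM" by (intro SM.mul SM.const SM.pw)
  qed
next
  case (pw1 a)
  show ?case
  proof (rule bexI[of _ "\<lambda>y. a * (y-1) powr (a-1)"])
    show "\<forall>y>1. ((\<lambda>y. (y-1) powr a) has_real_derivative a * (y-1) powr (a - 1)) (at y)"
    proof (intro allI impI)
      fix y :: real assume y: "y > 1"
      have d0: "((\<lambda>z. z powr a) has_real_derivative a * (y-1) powr (a-1)) (at (y-1))"
        using has_real_derivative_powr[of "y-1" a] y by simp
      have d1: "((\<lambda>x. x - 1) has_real_derivative 1) (at y)"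
        by (auto intro!: derivative_eq_intros)
      show "((\<lambda>y. (y-1) powr a) has_real_derivative a * (y-1) powr (a - 1)) (at y)"
        using DERIV_chain2[OF d0 d1] by simp
    qed
    show "(\<lambda>y. a * (y-1) powr (a - 1)) \<in> SM" by (intro SM.mul SM.const SM.pw1)
  qed
next
  case (add f g)
  then obtain f' g' where f': "f' \<in> SM" "\<forall>y>1. (f has_real_derivative f' y) (at y)"
    and g': "g' \<in> SM" "\<forall>y>1. (g has_real_derivative g' y) (at y)" by blast
  show ?case
    by (rule bexI[of _ "\<lambda>y. f' y + g' y"]) (use f' g' in \<open>auto intro: SM.add DERIV_add\<close>)
next
  case (mul f g)
  then obtain f' g' where f': "f' \<in> SM" "\<forall>y>1. (f has_real_derivative f' y) (at y)"
    and g': "g' \<in> SM" "\<forall>y>1. (g has_real_derivative g' y) (at y)" by blast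
  show ?case
    by (rule bexI[of _ "\<lambda>y. f' y * g y + g' y * f y"])
       (use f' g' mul.hyps in \<open>auto intro: SM.add SM.mul DERIV_mult\<close>)
next
  case (inv f)
  then obtain f' where f': "f' \<in> SM" "\<forall>y>1. (f has_real_derivative f' y) (at y)" by blast
  show ?case
  proof (rule bexI[of _ "\<lambda>y. (-1) * (f' y * (inverse (f y) * inverse (f y)))"])
    show "(\<lambda>y. (-1) * (f' y * (inverse (f y) * inverse (f y)))) \<in> SM"
      using f' inv.hyps by (intro SM.mul SM.const SM.inv) auto
    show "\<forall>y>1. ((\<lambda>y. inverse (f y)) has_real_derivative (-1) * (f' y * (inverse (f y) * inverse (f y)))) (at y)"
    proof (intro allI impI)
      fix y :: real assume y: "y > 1"
      have "((\<lambda>y. inverse (f y)) has_real_derivative (- (f' y * inverse(f y ^ Suc (Suc 0))))) (at y)"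
        using DERIV_inverse_fun[OF f'(2)[rule_format, OF y]] inv.hyps y by auto
      then show "((\<lambda>y. inverse (f y)) has_real_derivative (-1) * (f' y * (inverse (f y) * inverse (f y)))) (at y)"
        by (simp add: power2_eq_square)
    qed
  qed
next
  case (cong f g)
  then obtain f' where f': "f' \<in> SM" "\<forall>y>1. (f has_real_derivative f' y) (at y)" by blast
  show ?case
  proof (rule bexI[OF _ f'(1)], intro allI impI)
    fix y :: real assume y: "y > 1"
    show "(g has_real_derivative f' y) (at y)"
      by (rule has_field_derivative_transform_within_open[OF f'(2)[rule_format, OF y], of "{1<..}"])
         (use y cong.hyps in auto)
  qed
qed

lemma SM_smooth:
  assumes "f \<in> SM"
  shows "smooth_on f {1<..}"
proof -
  define step where "step = (\<lambda>h. SOME g. g \<in> SM \<and> (\<forall>y>1. (h has_real_derivative g y) (at y)))"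
  have step: "step h \<in> SM \<and> (\<forall>y>1. (h has_real_derivative step h y) (at y))" if h: "h \<in> SM" for h
  proof -
    have "\<exists>g. g \<in> SM \<and> (\<forall>y>1. (h has_real_derivative g y) (at y))"
      using SM_deriv[OF h] by blast
    then show ?thesis unfolding step_def by (rule someI_ex)
  qed
  define D where "D = (\<lambda>k. (step ^^ k) f)"
  have DS: "D (Suc k) = step (D k)" for k by (simp add: D_def)
  have D0: "D 0 = f" by (simp add: D_def)
  have Dk: "D k \<in> SM" for k
  proof (induction k)
    case 0 show ?case using assms D0 by simp
  next
    case (Suc k) then show ?case using step[of "D k"] DS[of k] by simp
  qed
  have "\<forall>k. \<forall>y\<in>{1<..}. (D k has_real_derivative D (Suc k) y) (at y)"
  proof (intro allI ballI)
    fix k :: nat and y :: real assume "y \<in> {1<..}"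
    then show "(D k has_real_derivative D (Suc k) y) (at y)"
      using step[OF Dk[of k]] DS[of k] by simp
  qed
  then show ?thesis unfolding smooth_on_def using D0 by blast
qed

lemma fA_smooth:
  fixes q :: real assumes q: "q > 1"
  shows "smooth_on (fA q) {1<..}"
proof -
  define p where "p = q/(q-1)"
  have "(\<lambda>y. ((-q) * y powr p) * inverse (y powr p + (-1) * (y-1) powr p) + (q-1) * y) \<in> SM"
  proof (intro SM.add SM.mul SM.const SM.pw SM.pw1 SM.ident SM.inv allI impI)
    fix y :: real assume "y > 1"
    then show "y powr p + (-1) * (y-1) powr p \<noteq> 0"
      using Dn_pos[OF q, of y] by (simp add: Dn_def p_def)
  qed
  then have "fA q \<in> SM"
    by (rule SM.cong) (auto simp: fA_def p_def divide_inverse)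
  then show ?thesis by (rule SM_smooth)
qed


theorem lemmaA1:
  fixes q :: real
  assumes "q > 1"
  shows "continuous_on {1..} (fA q)
       \<and> strict_mono_on {1..} (fA q)
       \<and> smooth_on (fA q) {1<..}
       \<and> bij_betw (fA q) {1..} {-1..<-1/2}
       \<and> strict_mono_on {-1..<-1/2} (the_inv_into {1..} (fA q))
       \<and> continuous_on {-1..<-1/2} (the_inv_into {1..} (fA q))
       \<and> (\<forall>y>1. (fA q has_real_derivative fA' q y) (at y))
       \<and> continuous_on {1..} (\<lambda>y. if y = 1 then q - 1 else fA' q y)"
proof (intro conjI allI impI)
  show "continuous_on {1..} (fA q)" by (rule fA_cont[OF assms])
  show "strict_mono_on {1..} (fA q)" by (rule fA_strict_mono[OF assms])
  show "smooth_on (fA q) {1<..}" by (rule fA_smooth[OF assms])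
  show "bij_betw (fA q) {1..} {-1..<-1/2}" by (rule fA_bij[OF assms])
  show "strict_mono_on {-1..<-1/2} (the_inv_into {1..} (fA q))" by (rule inv_mono[OF assms])
  show "continuous_on {-1..<-1/2} (the_inv_into {1..} (fA q))" by (rule inv_cont[OF assms])
  show "(fA q has_real_derivative fA' q y) (at y)" if "y > 1" for y by (rule fA_deriv[OF assms that])
  show "continuous_on {1..} (\<lambda>y. if y = 1 then q - 1 else fA' q y)" by (rule fA'_ext_cont[OF assms])
qed

end
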